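(* Let $\mathbb W$ and $\mathbb W_i$ be as in the context. For $2\le i\ne j\le n$, the subgroup $\mathbb W_i$ is not conjugate to $\mathbb W_j$ in $\mathbb W$.
   Context: Fix an integer $n\ge 3$, pairwise distinct odd integers $m_1,\dots,m_l\ge 3$ and positive integers $k_1,\dots,k_l$ with $k_1+\cdots+k_l=n-1$. Partition $\{2,\dots,n\}$ into consecutive blocks $A_1=\{2,\dots,k_1+1\}$, $A_2=\{k_1+2,\dots,k_1+k_2+1\}$, …, $A_l$ (of sizes $k_1,\dots,k_l$), and put $t_i=m_j$ for $i\in A_j$. The star group is $\mathbb W=\langle w_1,\dots,w_n\mid w_j^2=1\ (1\le j\le n),\ (w_1w_i)^{t_i}=1\ (2\le i\le n)\rangle$. For $2\le i\le n$ let $\mathbb W_i=\langle w_1,w_i\rangle$. *)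

theory Defs
  imports "HOL-Algebra.Algebra"
begin

text \<open>The group presented by generators w_1..w_n (all involutions) and relations
  (w_1 w_i)^(t i) = 1 for 2 <= i <= n, built concretely: elements are classes of
  words over {1..n} (letter j standing for w_j; since every generator is an involution
  no inverse letters are needed) modulo insertion/deletion of relators.\<close>

definition relators :: "nat \<Rightarrow> (nat \<Rightarrow> nat) \<Rightarrow> nat list set" where
  "relators n t = {[j, j] | j. 1 \<le> j \<and> j \<le> n}
     \<union> {concat (replicate (t i) [1, i]) | i. 2 \<le> i \<and> i \<le> n}"

definition wstep :: "nat \<Rightarrow> (nat \<Rightarrow> nat) \<Rightarrow> (nat list \<times> nat list) set" where
  "wstep n t = {(a @ r @ b, a @ b) | a r b. r \<in> relators n t}"

definition weq :: "nat \<Rightarrow> (nat \<Rightarrow> nat) \<Rightarrow> (nat list \<times> nat list) set" where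
  "weq n t = (wstep n t \<union> (wstep n t)\<inverse>)\<^sup>*"

definition W :: "nat \<Rightarrow> (nat \<Rightarrow> nat) \<Rightarrow> nat list set monoid" where
  "W n t = \<lparr> carrier = {ws. set ws \<subseteq> {1..n}} // weq n t,
             monoid.mult = (\<lambda>A B. weq n t `` {(SOME a. a \<in> A) @ (SOME b. b \<in> B)}),
             monoid.one = weq n t `` {[]} \<rparr>"

definition gen :: "nat \<Rightarrow> (nat \<Rightarrow> nat) \<Rightarrow> nat \<Rightarrow> nat list set" where
  "gen n t j = weq n t `` {[j]}"

definition Wsub :: "nat \<Rightarrow> (nat \<Rightarrow> nat) \<Rightarrow> nat \<Rightarrow> nat list set set" where
  "Wsub n t i = generate (W n t) {gen n t 1, gen n t i}"

end

theory Submission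
  imports Defs
begin

lemma weq_refl: "(x,x) \<in> weq n t" by (simp add: weq_def)

lemma weq_sym_rel: "sym (weq n t)"
  unfolding weq_def by (intro sym_rtrancl) (simp add: sym_Un_converse)

lemma weq_equiv: "equiv UNIV (weq n t)"
  by (intro equivI) (auto simp: weq_def refl_on_def weq_sym_rel[unfolded weq_def] trans_rtrancl)

lemma wstep_app:
  assumes "(u,v) \<in> wstep n t"
  shows "(u@y, v@y) \<in> wstep n t" "(y@u, y@v) \<in> wstep n t"
proof -
  from assms obtain a r b where "u = a@r@b" "v = a@b" "r \<in> relators n t"
    unfolding wstep_def by blast
  then show "(u@y, v@y) \<in> wstep n t" "(y@u, y@v) \<in> wstep n t"
    unfolding wstep_def
     apply (simp_all)
     apply (rule exI[of _ a], rule exI[of _ r]; simp)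
    apply (rule exI[of _ "y@a"], rule exI[of _ r]; simp)
    done
qed

lemma weq_app:
  assumes "(x,x') \<in> weq n t"
  shows "(x@y, x'@y) \<in> weq n t \<and> (y@x, y@x') \<in> weq n t"
  using assms unfolding weq_def
proof (induction rule: rtrancl_induct)
  case base then show ?case by simp
next
  case (step b c)
  then have "(b@y, c@y) \<in> wstep n t \<union> (wstep n t)\<inverse> \<and> (y@b, y@c) \<in> wstep n t \<union> (wstep n t)\<inverse>"
    using wstep_app by blast
  then show ?case using step.IH by (meson rtrancl.rtrancl_into_rtrancl)
qed

lemma weq_app2:
  assumes "(x,x') \<in> weq n t" "(y,y') \<in> weq n t"
  shows "(x@y, x'@y') \<in> weq n t"
proof -
  have "(x@y, x'@y) \<in> weq n t" using weq_app[OF assms(1)] by blast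
  moreover have "(x'@y, x'@y') \<in> weq n t" using weq_app[OF assms(2)] by blast
  ultimately show ?thesis unfolding weq_def by (meson rtrancl_trans)
qed

lemma weq_trans: "(x,y) \<in> weq n t \<Longrightarrow> (y,z) \<in> weq n t \<Longrightarrow> (x,z) \<in> weq n t"
  unfolding weq_def by (meson rtrancl_trans)

lemma weq_symI: "(x,y) \<in> weq n t \<Longrightarrow> (y,x) \<in> weq n t"
  using weq_sym_rel by (metis symD)

lemma some_class: "(a, SOME x. x \<in> weq n t `` {a}) \<in> weq n t"
proof -
  have "a \<in> weq n t `` {a}" by (simp add: weq_refl)
  then have "(SOME x. x \<in> weq n t `` {a}) \<in> weq n t `` {a}" by (rule someI)
  then show ?thesis by simp
qed

lemma class_eq: "(a,b) \<in> weq n t \<Longrightarrow> weq n t `` {a} = weq n t `` {b}"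
  using equiv_class_eq[OF weq_equiv] .

lemma W_mult: "weq n t `` {a} \<otimes>\<^bsub>W n t\<^esub> weq n t `` {b} = weq n t `` {a@b}"
  unfolding W_def using weq_app2[OF weq_symI[OF some_class] weq_symI[OF some_class]]
  by (simp add: class_eq)

lemma W_carrier: "Q \<in> carrier (W n t) \<longleftrightarrow> (\<exists>a. set a \<subseteq> {1..n} \<and> Q = weq n t `` {a})"
  unfolding W_def quotient_def by auto

lemma W_one: "\<one>\<^bsub>W n t\<^esub> = weq n t `` {[]}" by (simp add: W_def)

lemma rev_cancel: "set a \<subseteq> {1..n} \<Longrightarrow> (rev a @ a, []) \<in> weq n t"
proof (induction a)
  case Nil then show ?case by (simp add: weq_refl)
next
  case (Cons x a)
  have "[x,x] \<in> relators n t" using Cons.prems unfolding relators_def by auto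
  then have "(rev a @ [x,x] @ a, rev a @ a) \<in> wstep n t" unfolding wstep_def by blast
  then have "(rev (x#a) @ (x#a), rev a @ a) \<in> weq n t" unfolding weq_def by auto
  then show ?case using Cons by (auto intro: weq_trans)
qed

lemma W_group: "group (W n t)"
proof (rule groupI)
  fix x y assume "x \<in> carrier (W n t)" "y \<in> carrier (W n t)"
  then obtain a b where "set a \<subseteq> {1..n}" "x = weq n t `` {a}" "set b \<subseteq> {1..n}" "y = weq n t `` {b}"
    unfolding W_carrier by blast
  then show "x \<otimes>\<^bsub>W n t\<^esub> y \<in> carrier (W n t)"
    unfolding W_carrier using W_mult[of n t a b] by (intro exI[of _ "a@b"]) auto
next
  show "\<one>\<^bsub>W n t\<^esub> \<in> carrier (W n t)" unfolding W_carrier W_one by (intro exI[of _ "[]"]) auto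
next
  fix x y z assume "x \<in> carrier (W n t)" "y \<in> carrier (W n t)" "z \<in> carrier (W n t)"
  then show "x \<otimes>\<^bsub>W n t\<^esub> y \<otimes>\<^bsub>W n t\<^esub> z = x \<otimes>\<^bsub>W n t\<^esub> (y \<otimes>\<^bsub>W n t\<^esub> z)"
    unfolding W_carrier by (auto simp: W_mult)
next
  fix x assume "x \<in> carrier (W n t)"
  then show "\<one>\<^bsub>W n t\<^esub> \<otimes>\<^bsub>W n t\<^esub> x = x"
    unfolding W_carrier by (auto simp: W_mult W_one)
next
  fix x assume "x \<in> carrier (W n t)"
  then obtain a where a: "set a \<subseteq> {1..n}" "x = weq n t `` {a}" unfolding W_carrier by auto
  show "\<exists>y\<in>carrier (W n t). y \<otimes>\<^bsub>W n t\<^esub> x = \<one>\<^bsub>W n t\<^esub>"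
    by (rule bexI[of _ "weq n t `` {rev a}"])
      (use a in \<open>auto simp: W_mult W_one class_eq rev_cancel W_carrier intro!: exI[of _ "rev a"]\<close>)
qed

definition dm :: "int \<Rightarrow> int\<times>int \<Rightarrow> int\<times>int \<Rightarrow> int\<times>int" where
  "dm T p q = (fst p * fst q, (fst p * snd q + snd p) mod T)"

definition D :: "int \<Rightarrow> (int\<times>int) monoid" where
  "D T = \<lparr>carrier = {p. (fst p = 1 \<or> fst p = -1) \<and> 0 \<le> snd p \<and> snd p < T},
          monoid.mult = dm T, one = (1,0)\<rparr>"

lemma D_simps: "carrier (D T) = {p. (fst p = 1 \<or> fst p = -1) \<and> 0 \<le> snd p \<and> snd p < T}"
  "monoid.mult (D T) = dm T" "one (D T) = (1,0)"
  by (simp_all add: D_def)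

lemma dm_assoc: "dm T (dm T x y) z = dm T x (dm T y z)"
proof -
  have "(fst x * fst y * snd z + (fst x * snd y + snd x) mod T) mod T
        = (fst x * ((fst y * snd z + snd y) mod T) + snd x) mod T" (is "?L = ?R")
  proof -
    have "?R = (fst x * (fst y * snd z + snd y) + snd x) mod T"
      by (metis mod_add_left_eq mod_mult_right_eq)
    moreover have "?L = (fst x * fst y * snd z + (fst x * snd y + snd x)) mod T"
      by (metis mod_add_right_eq)
    ultimately show ?thesis by (simp add: algebra_simps)
  qed
  then show ?thesis by (simp add: dm_def mult.assoc)
qed

lemma D_group: assumes "T > 0" shows "group (D T)"
proof (rule groupI)
  fix x y assume "x \<in> carrier (D T)" "y \<in> carrier (D T)"
  then show "x \<otimes>\<^bsub>D T\<^esub> y \<in> carrier (D T)"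
    using assms by (auto simp: D_simps dm_def)
next
  show "\<one>\<^bsub>D T\<^esub> \<in> carrier (D T)" using assms by (simp add: D_simps)
next
  fix x y z
  show "x \<otimes>\<^bsub>D T\<^esub> y \<otimes>\<^bsub>D T\<^esub> z = x \<otimes>\<^bsub>D T\<^esub> (y \<otimes>\<^bsub>D T\<^esub> z)"
    by (simp add: D_simps dm_assoc)
next
  fix x assume "x \<in> carrier (D T)"
  then show "\<one>\<^bsub>D T\<^esub> \<otimes>\<^bsub>D T\<^esub> x = x"
    by (auto simp: D_simps dm_def prod_eq_iff)
next
  fix x assume x: "x \<in> carrier (D T)"
  show "\<exists>y\<in>carrier (D T). y \<otimes>\<^bsub>D T\<^esub> x = \<one>\<^bsub>D T\<^esub>"
  proof (rule bexI[of _ "(fst x, (- fst x * snd x) mod T)"])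
    have "(fst x * snd x + - fst x * snd x mod T) mod T = 0"
      by (simp add: mod_simps)
    then show "(fst x, (- fst x * snd x) mod T) \<otimes>\<^bsub>D T\<^esub> x = \<one>\<^bsub>D T\<^esub>"
      using x by (auto simp: D_simps dm_def)
  qed (use x assms in \<open>auto simp: D_simps\<close>)
qed

definition rho :: "nat \<Rightarrow> nat \<Rightarrow> int\<times>int" where
  "rho i x = (if x = i then (-1, 1) else (-1, 0))"

primrec phi :: "nat \<Rightarrow> int \<Rightarrow> nat list \<Rightarrow> int\<times>int" where
  "phi i T [] = (1,0)"
| "phi i T (x#w) = dm T (rho i x) (phi i T w)"

lemma phi_carrier: "T \<ge> 2 \<Longrightarrow> phi i T w \<in> carrier (D T)"
  by (induction w) (auto simp: D_simps dm_def rho_def)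

lemma phi_append: "T \<ge> 2 \<Longrightarrow> phi i T (u@v) = dm T (phi i T u) (phi i T v)"
proof (induction u)
  case Nil
  then have "phi i T v \<in> carrier (D T)" by (rule phi_carrier)
  then show ?case by (auto simp: D_simps dm_def prod_eq_iff)
next
  case (Cons x u) then show ?case by (simp add: dm_assoc)
qed

lemma phi_rep: assumes "T \<ge> 2" "i \<ge> 2"
  shows "phi i T (concat (replicate m [1,p])) = (if p = i then (1, (- int m) mod T) else (1,0))"
proof (induction m)
  case 0 then show ?case by simp
next
  case (Suc m)
  have "((- ((1 - (- int m) mod T) mod T)) mod T) = (- int (Suc m)) mod T"
    by (simp add: mod_simps algebra_simps)
  moreover have "(- int m - 1) mod T = (- 1 - int m) mod T" by (rule arg_cong[where f="\<lambda>x. x mod T"]) simp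
  ultimately show ?case using Suc assms by (auto simp: dm_def rho_def mod_simps)
qed

lemma phi_rel: assumes "T = int (t i)" "T \<ge> 2" "i \<ge> 2" "r \<in> relators n t"
  shows "phi i T r = (1,0)"
  using assms(4) unfolding relators_def
proof (elim UnE CollectE exE conjE)
  fix j assume "r = [j,j]" then show ?thesis by (simp add: dm_def rho_def)
next
  fix p assume "r = concat (replicate (t p) [1,p])"
  then show ?thesis using phi_rep[OF assms(2,3), of "t p" p] assms(1) by auto
qed

lemma phi_weq: assumes "T = int (t i)" "T \<ge> 2" "i \<ge> 2" "(u,v) \<in> weq n t"
  shows "phi i T u = phi i T v"
proof -
  have st: "phi i T x = phi i T y" if "(x,y) \<in> wstep n t" for x y
  proof -
    from that obtain a r b where "x = a@r@b" "y = a@b" "r \<in> relators n t"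
      unfolding wstep_def by blast
    then show ?thesis using phi_rel[of T t i, OF assms(1-3)] phi_append[OF assms(2)] phi_carrier[OF assms(2)]
      by (auto simp: dm_def D_simps prod_eq_iff)
  qed
  from assms(4) show ?thesis unfolding weq_def
    by (induction rule: rtrancl_induct) (auto dest: st)
qed

definition Phi :: "nat \<Rightarrow> int \<Rightarrow> nat list set \<Rightarrow> int\<times>int" where
  "Phi i T Q = phi i T (SOME a. a \<in> Q)"

lemma Phi_class: assumes "T = int (t i)" "T \<ge> 2" "i \<ge> 2"
  shows "Phi i T (weq n t `` {a}) = phi i T a"
  unfolding Phi_def using phi_weq[of T t i, OF assms some_class] by simp

lemma Phi_mult: assumes "T = int (t i)" "T \<ge> 2" "i \<ge> 2"
  shows "Phi i T (Q \<otimes>\<^bsub>W n t\<^esub> R) = dm T (Phi i T Q) (Phi i T R)"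
proof -
  have "Q \<otimes>\<^bsub>W n t\<^esub> R = weq n t `` {(SOME a. a \<in> Q) @ (SOME b. b \<in> R)}"
    by (simp add: W_def)
  then show ?thesis using Phi_class[of T t i, OF assms] phi_append[OF assms(2)] by (simp add: Phi_def)
qed

lemma block_exists:
  "0 < x \<Longrightarrow> x \<le> sum_list (k::nat list) \<Longrightarrow>
   \<exists>q<length k. sum_list (take q k) < x \<and> x \<le> sum_list (take (Suc q) k)"
proof (induction k arbitrary: x)
  case Nil then show ?case by simp
next
  case (Cons a k)
  show ?case
  proof (cases "x \<le> a")
    case True then show ?thesis using Cons.prems by (intro exI[of _ 0]) auto
  next
    case False
    have "0 < x - a" "x - a \<le> sum_list k" using False Cons.prems by auto
    then obtain q where "q < length k" "sum_list (take q k) < x - a" "x - a \<le> sum_list (take (Suc q) k)"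
      using Cons.IH[of "x - a"] by blast
    then show ?thesis using False by (intro exI[of _ "Suc q"]) auto
  qed
qed

lemma gen_carrier: "1 \<le> p \<Longrightarrow> p \<le> n \<Longrightarrow> gen n t p \<in> carrier (W n t)"
  unfolding gen_def W_carrier by (intro exI[of _ "[p]"]) auto

lemma inv_gen: assumes "1 \<le> p" "p \<le> n" shows "inv\<^bsub>W n t\<^esub> (gen n t p) = gen n t p"
proof -
  have "[p,p] \<in> relators n t" using assms unfolding relators_def by auto
  then have "([] @ [p,p] @ [], [] @ []) \<in> wstep n t" unfolding wstep_def by blast
  then have "([p,p], []) \<in> weq n t" unfolding weq_def by auto
  then have "gen n t p \<otimes>\<^bsub>W n t\<^esub> gen n t p = \<one>\<^bsub>W n t\<^esub>"
    unfolding gen_def W_mult W_one by (simp add: class_eq)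
  then show ?thesis using group.inv_equality[OF W_group] gen_carrier[OF assms] by blast
qed

lemma Phi_gen: assumes "T = int (t i)" "T \<ge> 2" "i \<ge> 2"
  shows "Phi i T (gen n t p) = rho i p"
  unfolding gen_def Phi_class[of T t i, OF assms] using assms(2) by (simp add: dm_def rho_def)

lemma Phi_one: assumes "T = int (t i)" "T \<ge> 2" "i \<ge> 2"
  shows "Phi i T (\<one>\<^bsub>W n t\<^esub>) = (1,0)"
  unfolding W_one Phi_class[of T t i, OF assms] by simp

lemma sub_small: assumes "T = int (t i)" "T \<ge> 2" "i \<ge> 2" "j \<noteq> i" "2 \<le> j" "j \<le> n"
  shows "Phi i T ` Wsub n t j \<subseteq> {(1,0), (-1,0)}"
proof
  fix y assume "y \<in> Phi i T ` Wsub n t j"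
  then obtain h where h: "h \<in> generate (W n t) {gen n t 1, gen n t j}" "y = Phi i T h"
    unfolding Wsub_def by blast
  have "Phi i T h \<in> {(1,0), (-1,0)}" using h(1)
  proof (induction rule: generate.induct)
    case one then show ?case using Phi_one[of T t i, OF assms(1-3)] by simp
  next
    case (incl h) then show ?case using Phi_gen[of T t i, OF assms(1-3)] assms by (auto simp: rho_def)
  next
    case (inv h)
    then have "inv\<^bsub>W n t\<^esub> h = h" using inv_gen assms by auto
    then show ?case using inv Phi_gen[of T t i, OF assms(1-3)] assms by (auto simp: rho_def)
  next
    case (eng h1 h2) then show ?case using Phi_mult[of T t i, OF assms(1-3)] assms(2)
      by (auto simp: dm_def)
  qed
  then show "y \<in> {(1,0), (-1,0)}" using h by simp
qed

lemma pig: "a \<in> {u,v} \<Longrightarrow> b \<in> {u,v} \<Longrightarrow> c \<in> {u,v} \<Longrightarrow> a \<noteq> b \<Longrightarrow> a \<noteq> c \<Longrightarrow> b \<noteq> c \<Longrightarrow> False"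
  by blast

theorem lemma3p4:
  fixes n l i j :: nat and m k :: "nat list" and t :: "nat \<Rightarrow> nat"
  assumes "n \<ge> 3"
    and "length m = l" and "length k = l"
    and "distinct m"
    and "\<forall>x\<in>set m. odd x \<and> x \<ge> 3"
    and "\<forall>x\<in>set k. x > 0"
    and "sum_list k = n - 1"
    and "\<forall>q<l. \<forall>p. 1 + sum_list (take q k) < p \<and> p \<le> 1 + sum_list (take (Suc q) k)
              \<longrightarrow> t p = m ! q"
    and "2 \<le> i" "i \<le> n" "2 \<le> j" "j \<le> n" "i \<noteq> j"
  shows "\<not> (\<exists>g\<in>carrier (W n t).
             (\<lambda>h. g \<otimes>\<^bsub>W n t\<^esub> h \<otimes>\<^bsub>W n t\<^esub> inv\<^bsub>W n t\<^esub> g) ` Wsub n t i = Wsub n t j)"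
proof
  obtain q where q: "q < length k" "sum_list (take q k) < i - 1" "i - 1 \<le> sum_list (take (Suc q) k)"
  proof -
    have "0 < i - 1" "i - 1 \<le> sum_list k" using assms(7,9,10) by auto
    then show ?thesis using that block_exists[of "i - 1" k] by blast
  qed
  moreover have "q < l" using q(1) assms(3) by simp
  moreover have "1 + sum_list (take q k) < i \<and> i \<le> 1 + sum_list (take (Suc q) k)"
    using q assms(9) by auto
  ultimately have "t i = m ! q" using assms(8) by blast
  then have "t i \<in> set m" using q(1) assms(2,3) by auto
  then have ti: "t i \<ge> 3" using assms(5) by auto
  define T where "T = int (t i)"
  have A: "T = int (t i)" "T \<ge> 2" "i \<ge> 2" using ti assms(9) by (auto simp: T_def)
  assume "\<exists>g\<in>carrier (W n t).
             (\<lambda>h. g \<otimes>\<^bsub>W n t\<^esub> h \<otimes>\<^bsub>W n t\<^esub> inv\<^bsub>W n t\<^esub> g) ` Wsub n t i = Wsub n t j"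
  then obtain g where g: "(\<lambda>h. g \<otimes>\<^bsub>W n t\<^esub> h \<otimes>\<^bsub>W n t\<^esub> inv\<^bsub>W n t\<^esub> g) ` Wsub n t i = Wsub n t j"
    by blast
  define x where "x = Phi i T g"
  define r where "r = Phi i T (inv\<^bsub>W n t\<^esub> g)"
  have xr: "x \<in> carrier (D T)" "r \<in> carrier (D T)"
    unfolding x_def r_def Phi_def using phi_carrier A(2) by auto
  define f where "f a = dm T (dm T x a) r" for a
  have key: "f (Phi i T h) \<in> {(1,0), (-1,0)}" if "h \<in> Wsub n t i" for h
  proof -
    have "g \<otimes>\<^bsub>W n t\<^esub> h \<otimes>\<^bsub>W n t\<^esub> inv\<^bsub>W n t\<^esub> g \<in> Wsub n t j"
      using g that by blast
    then have "Phi i T (g \<otimes>\<^bsub>W n t\<^esub> h \<otimes>\<^bsub>W n t\<^esub> inv\<^bsub>W n t\<^esub> g) \<in> {(1,0), (-1,0)}"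
      using sub_small[of T t i, OF A assms(13)[symmetric] assms(11,12)] by blast
    then show ?thesis using Phi_mult[of T t i, OF A] by (simp add: f_def x_def r_def)
  qed
  have inW: "\<one>\<^bsub>W n t\<^esub> \<in> Wsub n t i" "gen n t 1 \<in> Wsub n t i" "gen n t i \<in> Wsub n t i"
    unfolding Wsub_def by (rule generate.one, (rule generate.incl; simp)+)
  have v: "f (1,0) \<in> {(1,0), (-1,0)}" "f (-1,0) \<in> {(1,0), (-1,0)}" "f (-1,1) \<in> {(1,0), (-1,0)}"
    using key[OF inW(1)] key[OF inW(2)] key[OF inW(3)]
    unfolding Phi_one[of T t i, OF A] Phi_gen[of T t i, OF A] using A by (auto simp: rho_def)
  have inj: "a = b" if "f a = f b" "a \<in> carrier (D T)" "b \<in> carrier (D T)" for a b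
  proof -
    interpret G: group "D T" using D_group A(2) by simp
    have "x \<otimes>\<^bsub>D T\<^esub> a \<otimes>\<^bsub>D T\<^esub> r = x \<otimes>\<^bsub>D T\<^esub> b \<otimes>\<^bsub>D T\<^esub> r"
      using that(1) unfolding f_def D_simps(2) .
    then have "x \<otimes>\<^bsub>D T\<^esub> a = x \<otimes>\<^bsub>D T\<^esub> b"
      using G.r_cancel[of "x \<otimes>\<^bsub>D T\<^esub> a" r "x \<otimes>\<^bsub>D T\<^esub> b"] xr that(2,3) by blast
    then show ?thesis using G.l_cancel[of x a b] xr that(2,3) by blast
  qed
  have c: "(1::int,0::int) \<in> carrier (D T)" "(-1::int,0::int) \<in> carrier (D T)" "(-1::int,1::int) \<in> carrier (D T)"
    using A(2) by (auto simp: D_simps)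
  have d: "f (1,0) \<noteq> f (-1,0)" "f (1,0) \<noteq> f (-1,1)" "f (-1,0) \<noteq> f (-1,1)"
  proof -
    show "f (1,0) \<noteq> f (-1,0)" using inj[OF _ c(1) c(2)] by (metis prod.inject zero_neq_neg_one one_neq_neg_one)
    show "f (1,0) \<noteq> f (-1,1)" using inj[OF _ c(1) c(3)] by (metis prod.inject one_neq_neg_one)
    show "f (-1,0) \<noteq> f (-1,1)" using inj[OF _ c(2) c(3)] by (metis prod.inject zero_neq_one)
  qed
  show False by (rule pig[OF v d])
qed

end
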